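(* Let $Q$ be a supported quantale with base locale $Q_0$ and support $\varsigma$. The following are equivalent: (1) $\varsigma(xy)\le\varsigma(x)$ for all $x,y\in Q$; (2) $\varsigma(x1_Q)=\varsigma(x)$ for all $x\in Q$; (3) $\varsigma(xy)=\varsigma(x\triangleleft\varsigma(y))$ for all $x,y\in Q$.
   Context: For a locale $A$, an $A$-$A$-bimodule is a sup-lattice $M$ with actions $a\triangleright m$, $m\triangleleft a$ preserving joins in each variable, with $1_A\triangleright m=m$, $(a\wedge b)\triangleright m=a\triangleright(b\triangleright m)$, $m\triangleleft1_A=m$, $m\triangleleft(a\wedge b)=(m\triangleleft a)\triangleleft b$, $(a\triangleright m)\triangleleft b=a\triangleright(m\triangleleft b)$. An $A$-$A$-quantale is such a $Q$ with associative join-preserving multiplication and $(a\triangleright x)y=a\triangleright(xy)$, $(x\triangleleft a)y=x(a\triangleright y)$, $(xy)\triangleleft a=x(y\triangleleft a)$; involutive if there is a join-preserving $x\mapsto x^*$ with $x^{**}=x$, $(xy)^*=y^*x^*$, $(a\triangleright(x\triangleleft b))^*=b\triangleright(x^*\triangleleft a)$. A based quantale is an involutive $Q_0$-$Q_0$-quantale for a locale $Q_0$; $1_Q$ is its top. A supported quantale is a based quantale with a support, i.e. a join-preserving $\varsigma:Q\to Q_0$ with $\varsigma(1_Q)=1_{Q_0}$, $\varsigma(x)\triangleright y\le xx^*y$ and $\varsigma(x)\triangleright x=x$ for all $x,y\in Q$. *)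

theory Defs
  imports Main
begin

definition is_locale :: "'a::complete_lattice itself \<Rightarrow> bool" where
  "is_locale _ \<longleftrightarrow> (\<forall>(a::'a) S. inf a (Sup S) = (SUP s\<in>S. inf a s))"

definition join_pres :: "('a::complete_lattice \<Rightarrow> 'b::complete_lattice) \<Rightarrow> bool" where
  "join_pres f \<longleftrightarrow> (\<forall>S. f (Sup S) = (SUP s\<in>S. f s))"

definition bimodule ::
  "('a::complete_lattice \<Rightarrow> 'm::complete_lattice \<Rightarrow> 'm) \<Rightarrow> ('m \<Rightarrow> 'a \<Rightarrow> 'm) \<Rightarrow> bool" where
  "bimodule l r \<longleftrightarrow>
     (\<forall>a. join_pres (l a)) \<and> (\<forall>m. join_pres (\<lambda>a. l a m)) \<and>
     (\<forall>m. join_pres (r m)) \<and> (\<forall>a. join_pres (\<lambda>m. r m a)) \<and>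
     (\<forall>m. l top m = m) \<and> (\<forall>a b m. l (inf a b) m = l a (l b m)) \<and>
     (\<forall>m. r m top = m) \<and> (\<forall>a b m. r m (inf a b) = r (r m a) b) \<and>
     (\<forall>a b m. r (l a m) b = l a (r m b))"

definition AA_quantale ::
  "('a::complete_lattice \<Rightarrow> 'q::complete_lattice \<Rightarrow> 'q) \<Rightarrow> ('q \<Rightarrow> 'a \<Rightarrow> 'q) \<Rightarrow> ('q \<Rightarrow> 'q \<Rightarrow> 'q) \<Rightarrow> bool" where
  "AA_quantale l r mult \<longleftrightarrow>
     bimodule l r \<and>
     (\<forall>x y z. mult (mult x y) z = mult x (mult y z)) \<and>
     (\<forall>x. join_pres (mult x)) \<and> (\<forall>y. join_pres (\<lambda>x. mult x y)) \<and>
     (\<forall>a x y. mult (l a x) y = l a (mult x y)) \<and>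
     (\<forall>a x y. mult (r x a) y = mult x (l a y)) \<and>
     (\<forall>a x y. r (mult x y) a = mult x (r y a))"

definition involutive_AA_quantale ::
  "('a::complete_lattice \<Rightarrow> 'q::complete_lattice \<Rightarrow> 'q) \<Rightarrow> ('q \<Rightarrow> 'a \<Rightarrow> 'q) \<Rightarrow> ('q \<Rightarrow> 'q \<Rightarrow> 'q)
     \<Rightarrow> ('q \<Rightarrow> 'q) \<Rightarrow> bool" where
  "involutive_AA_quantale l r mult invl \<longleftrightarrow>
     AA_quantale l r mult \<and> join_pres invl \<and>
     (\<forall>x. invl (invl x) = x) \<and>
     (\<forall>x y. invl (mult x y) = mult (invl y) (invl x)) \<and>
     (\<forall>a b x. invl (l a (r x b)) = l b (r (invl x) a))"

definition based_quantale ::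
  "('a::complete_lattice \<Rightarrow> 'q::complete_lattice \<Rightarrow> 'q) \<Rightarrow> ('q \<Rightarrow> 'a \<Rightarrow> 'q) \<Rightarrow> ('q \<Rightarrow> 'q \<Rightarrow> 'q)
     \<Rightarrow> ('q \<Rightarrow> 'q) \<Rightarrow> bool" where
  "based_quantale l r mult invl \<longleftrightarrow> is_locale TYPE('a) \<and> involutive_AA_quantale l r mult invl"

definition is_support ::
  "('a::complete_lattice \<Rightarrow> 'q::complete_lattice \<Rightarrow> 'q) \<Rightarrow> ('q \<Rightarrow> 'q \<Rightarrow> 'q)
     \<Rightarrow> ('q \<Rightarrow> 'q) \<Rightarrow> ('q \<Rightarrow> 'a) \<Rightarrow> bool" where
  "is_support l mult invl supp \<longleftrightarrow>
     join_pres supp \<and> supp top = top \<and>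
     (\<forall>x y. l (supp x) y \<le> mult (mult x (invl x)) y) \<and>
     (\<forall>x. l (supp x) x = x)"

definition supported_quantale ::
  "('a::complete_lattice \<Rightarrow> 'q::complete_lattice \<Rightarrow> 'q) \<Rightarrow> ('q \<Rightarrow> 'a \<Rightarrow> 'q) \<Rightarrow> ('q \<Rightarrow> 'q \<Rightarrow> 'q)
     \<Rightarrow> ('q \<Rightarrow> 'q) \<Rightarrow> ('q \<Rightarrow> 'a) \<Rightarrow> bool" where
  "supported_quantale l r mult invl supp \<longleftrightarrow>
     based_quantale l r mult invl \<and> is_support l mult invl supp"

end

theory Submission
  imports Defs
begin

lemma jp_mono:
  assumes "join_pres f" "a \<le> b" shows "f a \<le> f b"
proof -
  have "f (Sup {a, b}) = (SUP s\<in>{a,b}. f s)" using assms(1) unfolding join_pres_def by blast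
  moreover have "Sup {a, b} = b" using assms(2) by (simp add: sup_absorb2)
  ultimately have "f b = sup (f a) (f b)" by simp
  then show ?thesis by (metis sup.cobounded1)
qed

theorem lemma3p15:
  fixes l :: "'a::complete_lattice \<Rightarrow> 'q::complete_lattice \<Rightarrow> 'q"
    and r :: "'q \<Rightarrow> 'a \<Rightarrow> 'q"
    and mult :: "'q \<Rightarrow> 'q \<Rightarrow> 'q"
    and invl :: "'q \<Rightarrow> 'q"
    and supp :: "'q \<Rightarrow> 'a"
  assumes "supported_quantale l r mult invl supp"
  shows "((\<forall>x y. supp (mult x y) \<le> supp x) \<longleftrightarrow> (\<forall>x. supp (mult x top) = supp x))
       \<and> ((\<forall>x. supp (mult x top) = supp x) \<longleftrightarrow> (\<forall>x y. supp (mult x y) = supp (r x (supp y))))"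
proof -
  have sj: "join_pres supp" and stop: "supp top = top"
    and sax: "\<And>x y. l (supp x) y \<le> mult (mult x (invl x)) y"
    and sfix: "\<And>x. l (supp x) x = x"
    using assms unfolding supported_quantale_def is_support_def by auto
  have q: "AA_quantale l r mult" using assms
    unfolding supported_quantale_def based_quantale_def involutive_AA_quantale_def by auto
  have assoc: "\<And>x y z. mult (mult x y) z = mult x (mult y z)"
    and mj1: "\<And>x. join_pres (mult x)" and mj2: "\<And>y. join_pres (\<lambda>x. mult x y)"
    and mid: "\<And>a x y. mult (r x a) y = mult x (l a y)"
    using q unfolding AA_quantale_def by auto
  have rtop: "\<And>m. r m top = m" using q unfolding AA_quantale_def bimodule_def by auto
  have smono: "\<And>a b. a \<le> b \<Longrightarrow> supp a \<le> supp b" using jp_mono[OF sj] .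
  have m1: "\<And>x a b. a \<le> b \<Longrightarrow> mult x a \<le> mult x b" using jp_mono[OF mj1] .
  have m2: "\<And>y a b. a \<le> b \<Longrightarrow> mult a y \<le> mult b y"
    using jp_mono[OF mj2] by fastforce
  have xle: "\<And>x. x \<le> mult x top"
  proof -
    fix x
    have "x = l (supp x) x" using sfix by simp
    also have "\<dots> \<le> mult (mult x (invl x)) x" by (rule sax)
    also have "\<dots> = mult x (mult (invl x) x)" by (rule assoc)
    also have "\<dots> \<le> mult x top" by (rule m1) simp
    finally show "x \<le> mult x top" .
  qed
  have xy1: "\<And>x y. mult x y \<le> mult x top" by (rule m1) simp
  have A: "(\<forall>x y. supp (mult x y) \<le> supp x) \<longleftrightarrow> (\<forall>x. supp (mult x top) = supp x)"
  proof
    assume H: "\<forall>x y. supp (mult x y) \<le> supp x"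
    show "\<forall>x. supp (mult x top) = supp x"
      using H smono[OF xle] by (metis order.antisym)
  next
    assume H: "\<forall>x. supp (mult x top) = supp x"
    show "\<forall>x y. supp (mult x y) \<le> supp x"
      using H smono[OF xy1] by metis
  qed
  have B: "(\<forall>x. supp (mult x top) = supp x) \<longleftrightarrow> (\<forall>x y. supp (mult x y) = supp (r x (supp y)))"
  proof
    assume H: "\<forall>x y. supp (mult x y) = supp (r x (supp y))"
    show "\<forall>x. supp (mult x top) = supp x" using H stop rtop by simp
  next
    assume H: "\<forall>x. supp (mult x top) = supp x"
    with A have H1: "\<And>x y. supp (mult x y) \<le> supp x" by blast
    show "\<forall>x y. supp (mult x y) = supp (r x (supp y))"
    proof (intro allI order.antisym)
      fix x y
      have "mult x y = mult (r x (supp y)) y" using mid sfix by metis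
      then show "supp (mult x y) \<le> supp (r x (supp y))" using H1 by metis
      have "mult (r x (supp y)) top = mult x (l (supp y) top)" by (rule mid)
      also have "\<dots> \<le> mult x (mult (mult y (invl y)) top)" by (rule m1) (rule sax)
      also have "\<dots> = mult (mult x y) (mult (invl y) top)" by (simp add: assoc)
      also have "\<dots> \<le> mult (mult x y) top" by (rule m1) simp
      finally have "supp (mult (r x (supp y)) top) \<le> supp (mult (mult x y) top)" by (rule smono)
      then show "supp (r x (supp y)) \<le> supp (mult x y)" using H by simp
    qed
  qed
  show ?thesis using A B by blast
qed

end
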